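(* Let $w,\pi,u\in S_n$ with $u\leq_L w$ and $u\leq_R\pi$. If \[ \ell(wu^{-1})+\ell(u)+\ell(u^{-1}\pi)>\ell(wu^{-1}\pi), \] then there exists $u'\in S_n$ with $u'>_B u$ in strong Bruhat order such that $u'\leq_L w$ and $u'\leq_R\pi$.
   Context: $S_n$ is the symmetric group with product $(uv)(i)=u(v(i))$. The length $\ell(w)$ is the number of inversions $\{(i,j):i<j,\ w(i)>w(j)\}$. Left weak order: $v\leq_L w$ iff $w=zv$ with $\ell(w)=\ell(z)+\ell(v)$; right weak order: $v\leq_R w$ iff $w=vz$ with $\ell(w)=\ell(v)+\ell(z)$. Strong Bruhat order $\leq_B$ is the partial order generated by the relations $v<_B vt$ whenever $t$ is a transposition and $\ell(vt)>\ell(v)$. *)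

theory Defs
  imports "HOL-Combinatorics.Permutations"
begin

text \<open>The symmetric group S_n: permutations of {1..n}, with product (u v)(i) = u(v(i)),
  i.e. function composition u \<circ> v.\<close>

definition Sym :: "nat \<Rightarrow> (nat \<Rightarrow> nat) set" where
  "Sym n = {p. p permutes {1..n}}"

definition len :: "nat \<Rightarrow> (nat \<Rightarrow> nat) \<Rightarrow> nat" where
  "len n w = card {(i, j). i \<in> {1..n} \<and> j \<in> {1..n} \<and> i < j \<and> w i > w j}"

definition left_weak :: "nat \<Rightarrow> (nat \<Rightarrow> nat) \<Rightarrow> (nat \<Rightarrow> nat) \<Rightarrow> bool" where
  "left_weak n v w \<longleftrightarrow> v \<in> Sym n \<and> w \<in> Sym n \<and>
     (\<exists>z \<in> Sym n. w = z \<circ> v \<and> len n w = len n z + len n v)"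

definition right_weak :: "nat \<Rightarrow> (nat \<Rightarrow> nat) \<Rightarrow> (nat \<Rightarrow> nat) \<Rightarrow> bool" where
  "right_weak n v w \<longleftrightarrow> v \<in> Sym n \<and> w \<in> Sym n \<and>
     (\<exists>z \<in> Sym n. w = v \<circ> z \<and> len n w = len n v + len n z)"

definition bruhat_step :: "nat \<Rightarrow> (nat \<Rightarrow> nat) \<Rightarrow> (nat \<Rightarrow> nat) \<Rightarrow> bool" where
  "bruhat_step n v w \<longleftrightarrow> v \<in> Sym n \<and>
     (\<exists>a \<in> {1..n}. \<exists>b \<in> {1..n}. a \<noteq> b \<and> w = v \<circ> Transposition.transpose a b
        \<and> len n w > len n v)"

definition bruhat_less :: "nat \<Rightarrow> (nat \<Rightarrow> nat) \<Rightarrow> (nat \<Rightarrow> nat) \<Rightarrow> bool" where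
  "bruhat_less n = (bruhat_step n)\<^sup>+\<^sup>+"

end

theory Submission
  imports Defs
begin


definition Iv :: "nat \<Rightarrow> (nat \<Rightarrow> nat) \<Rightarrow> (nat \<times> nat) set" where
  "Iv n w = {(i, j). i \<in> {1..n} \<and> j \<in> {1..n} \<and> i < j \<and> w i > w j}"

lemma len_Iv: "len n w = card (Iv n w)"
  by (simp add: len_def Iv_def)

lemma finite_Iv[simp]: "finite (Iv n w)"
  by (rule finite_subset[of _ "{1..n} \<times> {1..n}"]) (auto simp: Iv_def)

lemma Sym_in: assumes "p \<in> Sym n" "i \<in> {1..n}" shows "p i \<in> {1..n}"
proof -
  have "p permutes {1..n}" using assms(1) by (simp add: Sym_def)
  then show ?thesis using assms(2) by (simp only: permutes_in_image)
qed

lemma Sym_inj: assumes "p \<in> Sym n" "p i = p j" shows "i = j"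
proof -
  have "p permutes {1..n}" using assms(1) by (simp add: Sym_def)
  then have "inj p" by (rule permutes_inj)
  then show ?thesis using assms(2) by (rule injD)
qed

lemma Sym_comp: "p \<in> Sym n \<Longrightarrow> q \<in> Sym n \<Longrightarrow> p \<circ> q \<in> Sym n"
  unfolding Sym_def by (simp add: permutes_compose)

lemma Sym_inv: "p \<in> Sym n \<Longrightarrow> inv p \<in> Sym n"
  unfolding Sym_def by (simp add: permutes_inv)

lemma Sym_tr: "a \<in> {1..n} \<Longrightarrow> b \<in> {1..n} \<Longrightarrow> Transposition.transpose a b \<in> Sym n"
  unfolding Sym_def by (simp add: permutes_swap_id)

lemma Sym_invo: "p \<in> Sym n \<Longrightarrow> inv p \<circ> p = id"  "p \<in> Sym n \<Longrightarrow> p \<circ> inv p = id"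
  unfolding Sym_def by (auto simp: permutes_inv_o)

lemma Sym_ne: "p \<in> Sym n \<Longrightarrow> i \<noteq> j \<Longrightarrow> p i \<noteq> p j"
  using Sym_inj by blast

lemma Sym_out: "p \<in> Sym n \<Longrightarrow> i \<notin> {1..n} \<Longrightarrow> p i = i"
  unfolding Sym_def by (simp add: permutes_not_in)

lemma Sym_ge1: assumes "p \<in> Sym n" "1 \<le> x" shows "1 \<le> p x"
proof (cases "x \<in> {1..n}")
  case True with Sym_in[OF assms(1) True] show ?thesis by auto
next
  case False with Sym_out[OF assms(1) False] assms(2) show ?thesis by auto
qed

lemma Sym_len: assumes "p \<in> Sym n" "x \<le> n" shows "p x \<le> n"
proof (cases "x \<in> {1..n}")
  case True with Sym_in[OF assms(1) True] show ?thesis by auto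
next
  case False with Sym_out[OF assms(1) False] assms(2) show ?thesis by auto
qed

lemma CL:
  assumes a: "a \<in> Sym n" and b: "b \<in> Sym n"
  shows "len n (a \<circ> b) + 2 * card {(i,j) \<in> Iv n b. a (b i) < a (b j)} = len n a + len n b"
proof -
  define A1 where "A1 = {(i,j). i \<in> {1..n} \<and> j \<in> {1..n} \<and> i < j \<and> b i < b j \<and> a (b i) > a (b j)}"
  define A2 where "A2 = {(i,j). i \<in> {1..n} \<and> j \<in> {1..n} \<and> i < j \<and> b i > b j \<and> a (b i) > a (b j)}"
  define C where "C = {(i,j) \<in> Iv n b. a (b i) < a (b j)}"
  define Y where "Y = {(i,j). i \<in> {1..n} \<and> j \<in> {1..n} \<and> b i < b j \<and> a (b i) > a (b j)}"
  define Y2 where "Y2 = {(i,j). i \<in> {1..n} \<and> j \<in> {1..n} \<and> i > j \<and> b i < b j \<and> a (b i) > a (b j)}"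
  have fin: "finite A1" "finite A2" "finite C" "finite Y2"
    by (rule finite_subset[of _ "{1..n} \<times> {1..n}"]; auto simp: A1_def A2_def C_def Y2_def Iv_def)+
  have binj: "\<And>i j. b i = b j \<Longrightarrow> i = j" using b Sym_inj by blast
  have ainj: "\<And>i j. a i = a j \<Longrightarrow> i = j" using a Sym_inj by blast
  have bne: "\<And>i j. i < j \<Longrightarrow> b i \<noteq> b j" using binj by blast
  have ane: "\<And>i j. i < j \<Longrightarrow> a i \<noteq> a j" using ainj by blast
  have ane2: "\<And>i j. i < j \<Longrightarrow> a (b i) \<noteq> a (b j)" using ainj binj by blast
  have "Iv n (a \<circ> b) = A1 \<union> A2"
    by (auto simp: Iv_def A1_def A2_def) (meson bne nat_neq_iff)+
  moreover have "A1 \<inter> A2 = {}" by (auto simp: A1_def A2_def)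
  ultimately have e1: "len n (a \<circ> b) = card A1 + card A2"
    by (simp add: len_Iv card_Un_disjoint fin)
  have "Iv n b = A2 \<union> C"
    by (auto simp: Iv_def A2_def C_def) (meson ane2 nat_neq_iff)+
  moreover have "A2 \<inter> C = {}" by (auto simp: A2_def C_def)
  ultimately have e2: "len n b = card A2 + card C"
    by (simp add: len_Iv card_Un_disjoint fin)
  have "Y = A1 \<union> Y2"
    using binj by (auto simp: Y_def A1_def Y2_def) (metis nat_neq_iff less_irrefl)+
  moreover have "A1 \<inter> Y2 = {}" by (auto simp: A1_def Y2_def)
  ultimately have e3: "card Y = card A1 + card Y2"
    by (simp add: card_Un_disjoint fin)
  have "bij_betw (\<lambda>(i,j). (j,i)) Y2 C"
    by (rule bij_betw_byWitness[where f'="\<lambda>(i,j). (j,i)"]) (auto simp: Y2_def C_def Iv_def)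
  hence e4: "card Y2 = card C" by (rule bij_betw_same_card)
  have bi: "\<And>x. x \<in> {1..n} \<Longrightarrow> b (inv b x) = x" "\<And>x. inv b (b x) = x"
    using b unfolding Sym_def by (auto simp: permutes_inverses permutes_inv_eq)
  have bin: "\<And>x. x \<in> {1..n} \<Longrightarrow> inv b x \<in> {1..n}"
    using b unfolding Sym_def by (metis mem_Collect_eq permutes_in_image permutes_inv)
  have b1: "\<And>x. Suc 0 \<le> x \<Longrightarrow> Suc 0 \<le> b x" and b2: "\<And>x. x \<le> n \<Longrightarrow> b x \<le> n"
    using Sym_ge1[OF b] Sym_len[OF b] by auto
  have b3: "\<And>x. Suc 0 \<le> x \<Longrightarrow> Suc 0 \<le> inv b x" and b4: "\<And>x. x \<le> n \<Longrightarrow> inv b x \<le> n"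
    using Sym_ge1[OF Sym_inv[OF b]] Sym_len[OF Sym_inv[OF b]] by auto
  have "bij_betw (\<lambda>(i,j). (b i, b j)) Y (Iv n a)"
    by (rule bij_betw_byWitness[where f'="\<lambda>(i,j). (inv b i, inv b j)"])
       (auto simp: Y_def Iv_def bi bin b1 b2 b3 b4)
  hence e5: "card Y = len n a" by (simp add: len_Iv bij_betw_same_card)
  show ?thesis using e1 e2 e3 e4 e5 unfolding C_def by linarith
qed

lemma add_iff:
  assumes a: "a \<in> Sym n" and b: "b \<in> Sym n"
  shows "len n (a \<circ> b) = len n a + len n b \<longleftrightarrow> Iv n b \<subseteq> Iv n (a \<circ> b)"
proof -
  let ?C = "{(i,j) \<in> Iv n b. a (b i) < a (b j)}"
  have fC: "finite ?C" by (rule finite_subset[of _ "Iv n b"]) auto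
  have "len n (a \<circ> b) = len n a + len n b \<longleftrightarrow> ?C = {}"
  proof -
    have "?C = {} \<longleftrightarrow> card ?C = 0" using fC by simp
    then show ?thesis using CL[OF a b] by linarith
  qed
  also have "\<dots> \<longleftrightarrow> Iv n b \<subseteq> Iv n (a \<circ> b)"
  proof
    assume c0: "?C = {}"
    show "Iv n b \<subseteq> Iv n (a \<circ> b)"
    proof
      fix x assume x: "x \<in> Iv n b"
      obtain i j where ij: "x = (i,j)" by (cases x)
      have m: "i \<in> {1..n}" "j \<in> {1..n}" "i < j" using x ij by (auto simp: Iv_def)
      have "\<not> a (b i) < a (b j)"
      proof
        assume "a (b i) < a (b j)"
        then have "(i,j) \<in> ?C" using x ij by simp
        then show False using c0 by simp
      qed
      moreover have "a (b i) \<noteq> a (b j)" using Sym_ne[OF a] Sym_ne[OF b] m by simp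
      ultimately have "a (b i) > a (b j)" by simp
      then show "x \<in> Iv n (a \<circ> b)" using m ij by (simp add: Iv_def)
    qed
  next
    assume sub: "Iv n b \<subseteq> Iv n (a \<circ> b)"
    have h: "\<And>i j. (i,j) \<in> Iv n b \<Longrightarrow> a (b i) > a (b j)"
    proof -
      fix i j assume "(i,j) \<in> Iv n b"
      then have "(i,j) \<in> Iv n (a \<circ> b)" using sub by blast
      then show "a (b i) > a (b j)" unfolding Iv_def by simp
    qed
    show "?C = {}"
    proof (rule equals0I)
      fix x assume "x \<in> ?C"
      then obtain i j where "(i,j) \<in> Iv n b" "a (b i) < a (b j)" by auto
      then have "a (b i) > a (b j)" "a (b i) < a (b j)" using h by auto
      then show False by simp
    qed
  qed
  finally show ?thesis .
qed

lemma subadd: "a \<in> Sym n \<Longrightarrow> b \<in> Sym n \<Longrightarrow> len n (a \<circ> b) \<le> len n a + len n b"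
  using CL[of a n b] by linarith

lemma left_weak_iff: "left_weak n v w \<longleftrightarrow> v \<in> Sym n \<and> w \<in> Sym n \<and> Iv n v \<subseteq> Iv n w"
proof
  assume "left_weak n v w"
  then obtain z where z: "z \<in> Sym n" "w = z \<circ> v" "len n w = len n z + len n v" "v \<in> Sym n" "w \<in> Sym n"
    unfolding left_weak_def by blast
  then show "v \<in> Sym n \<and> w \<in> Sym n \<and> Iv n v \<subseteq> Iv n w" using add_iff[of z n v] by simp
next
  assume h: "v \<in> Sym n \<and> w \<in> Sym n \<and> Iv n v \<subseteq> Iv n w"
  define z where "z = w \<circ> inv v"
  have zS: "z \<in> Sym n" using h by (simp add: z_def Sym_comp Sym_inv)
  have zv: "z \<circ> v = w" using h Sym_invo[of v n] by (simp add: z_def comp_assoc)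
  show "left_weak n v w" unfolding left_weak_def
    using h zS zv add_iff[of z n v] by auto
qed

lemma len_inv:
  assumes p: "p \<in> Sym n" shows "len n (inv p) = len n p"
proof -
  have pi: "\<And>x. x \<in> {1..n} \<Longrightarrow> p (inv p x) = x" "\<And>x. inv p (p x) = x"
    using p unfolding Sym_def by (auto simp: permutes_inverses permutes_inv_eq)
  have p1: "\<And>x. Suc 0 \<le> x \<Longrightarrow> Suc 0 \<le> p x" and p2: "\<And>x. x \<le> n \<Longrightarrow> p x \<le> n"
    using Sym_ge1[OF p] Sym_len[OF p] by auto
  have p3: "\<And>x. Suc 0 \<le> x \<Longrightarrow> Suc 0 \<le> inv p x" and p4: "\<And>x. x \<le> n \<Longrightarrow> inv p x \<le> n"
    using Sym_ge1[OF Sym_inv[OF p]] Sym_len[OF Sym_inv[OF p]] by auto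
  have "bij_betw (\<lambda>(i,j). (p j, p i)) (Iv n p) (Iv n (inv p))"
    by (rule bij_betw_byWitness[where f'="\<lambda>(i,j). (inv p j, inv p i)"])
       (auto simp: Iv_def pi p1 p2 p3 p4)
  then show ?thesis by (simp add: len_Iv bij_betw_same_card)
qed

abbreviation tr :: "nat \<Rightarrow> nat \<Rightarrow> nat \<Rightarrow> nat" where "tr \<equiv> Transposition.transpose"

lemma swap_len:
  assumes p: "p \<in> Sym n" and ab: "1 \<le> a" "a < b" "b \<le> n" and pab: "p a < p b"
  shows "len n p < len n (p \<circ> tr a b)"
proof -
  define t where "t = tr a b"
  define q where "q = p \<circ> t"
  define phi where "phi = (\<lambda>(i::nat,j::nat). if t i < t j then (t i, t j) else (i,j))"
  have tt: "\<And>x. t (t x) = x" by (simp add: t_def transpose_def)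
  have tin: "\<And>x. x \<in> {1..n} \<Longrightarrow> t x \<in> {1..n}" using ab by (auto simp: t_def transpose_def)
  have pne: "\<And>x y. x \<noteq> y \<Longrightarrow> p x \<noteq> p y" using Sym_ne[OF p] by blast
  have inj: "inj_on phi (Iv n p)"
  proof (rule inj_onI)
    fix x y assume x: "x \<in> Iv n p" and y: "y \<in> Iv n p" and e: "phi x = phi y"
    obtain i j where xi: "x = (i,j)" by (cases x)
    obtain i' j' where yi: "y = (i',j')" by (cases y)
    have lt: "i < j" "i' < j'" using x y xi yi by (auto simp: Iv_def)
    show "x = y"
    proof (cases "t i < t j")
      case True
      show ?thesis
      proof (cases "t i' < t j'")
        case True2: True
        then have "t i = t i'" "t j = t j'" using e True by (auto simp: phi_def xi yi)
        then have "t (t i) = t (t i')" "t (t j) = t (t j')" by simp_all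
        then show ?thesis using xi yi tt by simp
      next
        case False
        then have "t i = i'" "t j = j'" using e True by (auto simp: phi_def xi yi)
        then have "t i' = i" "t j' = j" using tt by auto
        then show ?thesis using False lt by simp
      qed
    next
      case False
      show ?thesis
      proof (cases "t i' < t j'")
        case True
        then have "t i' = i" "t j' = j" using e False by (auto simp: phi_def xi yi)
        then have "t i = i'" "t j = j'" using tt by auto
        then show ?thesis using False lt by simp
      next
        case False2: False
        then show ?thesis using e False by (auto simp: phi_def xi yi)
      qed
    qed
  qed
  have sub: "phi ` Iv n p \<subseteq> Iv n q - {(a,b)}"
  proof
    fix y assume "y \<in> phi ` Iv n p"
    then obtain i j where ij: "(i,j) \<in> Iv n p" "y = phi (i,j)" by auto
    have r: "i \<in> {1..n}" "j \<in> {1..n}" "i < j" "p i > p j" using ij by (auto simp: Iv_def)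
    show "y \<in> Iv n q - {(a,b)}"
    proof (cases "t i < t j")
      case True
      then have y: "y = (t i, t j)" using ij by (simp add: phi_def)
      have "q (t i) > q (t j)" using r tt by (simp add: q_def)
      moreover have "(t i, t j) \<noteq> (a,b)"
      proof
        assume "(t i, t j) = (a,b)"
        then have "i = b" "j = a" using tt by (auto simp: t_def transpose_def split: if_splits)
        then show False using r ab by simp
      qed
      ultimately show ?thesis using y tin r True by (simp add: Iv_def)
    next
      case False
      then have y: "y = (i, j)" using ij by (simp add: phi_def)
      have "(i,j) \<noteq> (a,b)" using r pab by auto
      moreover have "q i > q j"
        using False r ab pab unfolding q_def t_def transpose_def
        by (auto split: if_splits)
      ultimately show ?thesis using y r by (simp add: Iv_def)
    qed
  qed
  have abq: "(a,b) \<in> Iv n q" using ab pab by (simp add: Iv_def q_def t_def)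
  have "card (Iv n p) = card (phi ` Iv n p)" using inj by (simp add: card_image)
  also have "\<dots> \<le> card (Iv n q - {(a,b)})" by (rule card_mono) (simp_all add: sub)
  also have "\<dots> < card (Iv n q)" by (rule card_Diff1_less[OF finite_Iv abq])
  finally show ?thesis by (simp add: len_Iv q_def t_def)
qed

lemma len_s: assumes "1 \<le> m" "m < n" shows "len n (tr m (Suc m)) = 1"
proof -
  have "Iv n (tr m (Suc m)) = {(m, Suc m)}"
    using assms by (auto simp: Iv_def transpose_def split: if_splits)
  then show ?thesis by (simp add: len_Iv)
qed

lemma tr_Sym: "1 \<le> m \<Longrightarrow> m < n \<Longrightarrow> tr m (Suc m) \<in> Sym n"
  by (rule Sym_tr) auto

lemma ss: "p \<circ> tr a b \<circ> tr a b = p"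
  by (simp add: comp_assoc)

lemma right_up:
  assumes p: "p \<in> Sym n" and m: "1 \<le> m" "m < n" and d: "p m < p (Suc m)"
  shows "len n (p \<circ> tr m (Suc m)) = len n p + 1"
proof -
  have "len n p < len n (p \<circ> tr m (Suc m))" using swap_len[OF p, of m "Suc m"] m d by simp
  moreover have "len n (p \<circ> tr m (Suc m)) \<le> len n p + 1"
    using subadd[OF p tr_Sym[OF m]] len_s[OF m] by simp
  ultimately show ?thesis by simp
qed

lemma right_down:
  assumes p: "p \<in> Sym n" and m: "1 \<le> m" "m < n" and d: "p m > p (Suc m)"
  shows "len n (p \<circ> tr m (Suc m)) + 1 = len n p"
proof -
  let ?q = "p \<circ> tr m (Suc m)"
  have q: "?q \<in> Sym n" using Sym_comp[OF p tr_Sym[OF m]] .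
  have qd: "?q m < ?q (Suc m)" using d by simp
  have e: "?q \<circ> tr m (Suc m) = p" by (rule ss)
  show ?thesis using right_up[OF q m qd] unfolding e by linarith
qed

lemma chain_le:
  fixes q :: "nat \<Rightarrow> nat"
  shows "i \<le> j \<Longrightarrow> (\<And>m. i \<le> m \<Longrightarrow> m < j \<Longrightarrow> q m \<le> q (Suc m)) \<Longrightarrow> q i \<le> q j"
proof (induction j)
  case 0 then show ?case by simp
next
  case (Suc j)
  show ?case
  proof (cases "i = Suc j")
    case True then show ?thesis by simp
  next
    case False
    then have "i \<le> j" using Suc.prems by simp
    then have "q i \<le> q j" using Suc by simp
    also have "q j \<le> q (Suc j)" using Suc.prems \<open>i \<le> j\<close> by simp
    finally show ?thesis .
  qed
qed

lemma descent_exists: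
  assumes q: "q \<in> Sym n" and l: "len n q > 0"
  shows "\<exists>m. 1 \<le> m \<and> m < n \<and> q m > q (Suc m)"
proof -
  have "Iv n q \<noteq> {}" using l by (auto simp: len_Iv)
  then obtain i j where ij: "(i,j) \<in> Iv n q" by auto
  then have r: "1 \<le> i" "i < j" "j \<le> n" "q i > q j" by (auto simp: Iv_def)
  show ?thesis
  proof (rule ccontr)
    assume na: "\<not> ?thesis"
    have "\<And>m. i \<le> m \<Longrightarrow> m < j \<Longrightarrow> q m \<le> q (Suc m)"
    proof -
      fix m assume "i \<le> m" "m < j"
      then have "1 \<le> m" "m < n" using r by auto
      then show "q m \<le> q (Suc m)" using na not_less by blast
    qed
    then have "q i \<le> q j" using chain_le[of i j q] r by simp
    then show False using r by simp
  qed
qed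

lemma step_Sym: assumes "bruhat_step n v w" shows "v \<in> Sym n \<and> w \<in> Sym n"
proof -
  obtain a b where ab: "v \<in> Sym n" "a \<in> {1..n}" "b \<in> {1..n}" "w = v \<circ> tr a b"
    using assms unfolding bruhat_step_def by blast
  then show ?thesis using Sym_comp[OF ab(1) Sym_tr[OF ab(2,3)]] by simp
qed

lemma step_len: "bruhat_step n v w \<Longrightarrow> len n v < len n w"
  unfolding bruhat_step_def by blast

lemma less_len: "bruhat_less n a b \<Longrightarrow> len n a < len n b"
  unfolding bruhat_less_def
proof (induction rule: tranclp_induct)
  case (base y) then show ?case by (rule step_len)
next
  case (step y z) then show ?case using step_len[OF step.hyps(2)] by simp
qed

lemma mk_step:
  assumes c: "c \<in> Sym n" and pq: "1 \<le> p" "p < q" "q \<le> n" and cpq: "c p < c q"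
  shows "bruhat_step n c (c \<circ> tr p q)"
  unfolding bruhat_step_def using c pq cpq swap_len[OF c pq cpq]
  by (intro conjI bexI[where x=p] bexI[where x=q]) auto

lemma step_norm:
  assumes st: "bruhat_step n c c'"
  shows "\<exists>p q. 1 \<le> p \<and> p < q \<and> q \<le> n \<and> c' = c \<circ> tr p q \<and> c p < c q"
proof -
  obtain a b where ab: "c \<in> Sym n" "a \<in> {1..n}" "b \<in> {1..n}" "a \<noteq> b" "c' = c \<circ> tr a b" "len n c' > len n c"
    using st unfolding bruhat_step_def by blast
  define p where "p = min a b"
  define q where "q = max a b"
  have pq: "1 \<le> p" "p < q" "q \<le> n" using ab by (auto simp: p_def q_def)
  have t: "tr a b = tr p q" by (cases "a < b") (auto simp: p_def q_def transpose_commute)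
  have c'S: "c' \<in> Sym n" using step_Sym[OF st] by blast
  have "c p < c q"
  proof (rule ccontr)
    assume "\<not> c p < c q"
    moreover have "c p \<noteq> c q" using Sym_ne[OF ab(1)] pq by simp
    ultimately have "c' p < c' q" using ab(5) t by simp
    from swap_len[OF c'S pq this] have "len n c' < len n (c' \<circ> tr p q)" .
    moreover have "c' \<circ> tr p q = c" using ab(5) t by (simp add: ss)
    ultimately show False using ab(6) by simp
  qed
  then show ?thesis using pq ab(5) t by (intro exI[where x=p] exI[where x=q]) simp
qed

definition mn :: "nat \<Rightarrow> (nat \<Rightarrow> nat) \<Rightarrow> (nat \<Rightarrow> nat)" where
  "mn m c = (if c m < c (Suc m) then c else c \<circ> tr m (Suc m))"

lemma mn_step:
  assumes st: "bruhat_step n c c'" and m: "1 \<le> m" "m < n"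
  shows "(bruhat_step n)\<^sup>*\<^sup>* (mn m c) (mn m c')"
proof -
  obtain p q where pq: "1 \<le> p" "p < q" "q \<le> n" "c' = c \<circ> tr p q" "c p < c q"
    using step_norm[OF st] by blast
  have c: "c \<in> Sym n" and c'S: "c' \<in> Sym n" using step_Sym[OF st] by auto
  let ?s = "tr m (Suc m)"
  have cne: "c m \<noteq> c (Suc m)" using Sym_ne[OF c] by simp
  have c'ne: "c' m \<noteq> c' (Suc m)" using Sym_ne[OF c'S] by simp
  have sS: "?s \<in> Sym n" using tr_Sym[OF m] .
  have csS: "c \<circ> ?s \<in> Sym n" using Sym_comp[OF c sS] .
  show ?thesis
  proof (cases "c m < c (Suc m)")
    case cA: True
    show ?thesis
    proof (cases "c' m < c' (Suc m)")
      case True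
      then show ?thesis using cA st by (simp add: mn_def)
    next
      case False
      then have c'D: "c' m > c' (Suc m)" using c'ne by simp
      have mnc: "mn m c = c" "mn m c' = c' \<circ> ?s" using cA c'D by (auto simp: mn_def)
      show ?thesis
      proof (cases "p = m \<and> q = Suc m")
        case True
        then have "c' \<circ> ?s = c" using pq(4) by (simp add: ss)
        then show ?thesis using mnc by simp
      next
        case npq: False
        consider (P) "p = m" "q > Suc m" | (Q) "q = Suc m" "p < m"
        proof -
          have "p = m \<or> p = Suc m \<or> q = m \<or> q = Suc m"
          proof (rule ccontr)
            assume "\<not> ?thesis"
            then have "c' m = c m" "c' (Suc m) = c (Suc m)" using pq(4) by auto
            then show False using cA c'D by simp
          qed
          moreover have "p \<noteq> Suc m"
          proof
            assume h: "p = Suc m"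
            then have "c' m = c m" "c' (Suc m) = c q" using pq(2,4) by auto
            then show False using cA c'D pq(5) h by simp
          qed
          moreover have "q \<noteq> m"
          proof
            assume h: "q = m"
            then have "c' m = c p" "c' (Suc m) = c (Suc m)" using pq(2,4) by auto
            then show False using cA c'D pq(5) h by simp
          qed
          ultimately show ?thesis using that npq pq(2) by force
        qed
        then show ?thesis
        proof cases
          case P
          have st1: "bruhat_step n c (c \<circ> ?s)" using mk_step[OF c m(1) _ _ cA] m by simp
          have "(c \<circ> ?s) (Suc m) < (c \<circ> ?s) q" using P pq(5) by simp
          then have st2: "bruhat_step n (c \<circ> ?s) (c \<circ> ?s \<circ> tr (Suc m) q)"
            using mk_step[OF csS, of "Suc m" q] P pq(3) by simp
          have e: "c \<circ> ?s \<circ> tr (Suc m) q = c' \<circ> ?s"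
            using P pq(4) by (auto simp: transpose_def fun_eq_iff)
          show ?thesis using st1 st2 e mnc by simp
        next
          case Q
          have "c p < c m" using Q pq(4) c'D by simp
          then have st1: "bruhat_step n c (c \<circ> tr p m)" using mk_step[OF c pq(1), of m] Q m by simp
          have dS: "c \<circ> tr p m \<in> Sym n" using step_Sym[OF st1] by blast
          have "(c \<circ> tr p m) p < (c \<circ> tr p m) (Suc m)" using Q cA by simp
          then have st2: "bruhat_step n (c \<circ> tr p m) (c \<circ> tr p m \<circ> tr p (Suc m))"
            using mk_step[OF dS pq(1), of "Suc m"] Q m by simp
          have e: "c \<circ> tr p m \<circ> tr p (Suc m) = c' \<circ> ?s"
            using Q pq(4) by (auto simp: transpose_def fun_eq_iff)
          show ?thesis using st1 st2 e mnc by simp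
        qed
      qed
    qed
  next
    case False
    then have cD: "c m > c (Suc m)" using cne by simp
    show ?thesis
    proof (cases "c' m < c' (Suc m)")
      case True
      have mnc: "mn m c = c \<circ> ?s" "mn m c' = c'" using cD True by (auto simp: mn_def)
      have "(c \<circ> ?s) m < (c \<circ> ?s) (Suc m)" using cD by simp
      then have st1: "bruhat_step n (c \<circ> ?s) (c \<circ> ?s \<circ> ?s)" using mk_step[OF csS m(1), of "Suc m"] m by simp
      then show ?thesis using st mnc by (simp add: ss)
    next
      case False
      then have c'D: "c' m > c' (Suc m)" using c'ne by simp
      have mnc: "mn m c = c \<circ> ?s" "mn m c' = c' \<circ> ?s" using cD c'D by (auto simp: mn_def)
      have npq: "\<not> (p = m \<and> q = Suc m)" using cD pq(5) by auto
      define p' where "p' = ?s p"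
      define q' where "q' = ?s q"
      have lt: "p' < q'" using npq pq(2) by (auto simp: p'_def q'_def transpose_def)
      have rg: "1 \<le> p'" "q' \<le> n" using pq m by (auto simp: p'_def q'_def transpose_def)
      have "(c \<circ> ?s) p' < (c \<circ> ?s) q'" using pq(5) by (simp add: p'_def q'_def)
      then have st1: "bruhat_step n (c \<circ> ?s) (c \<circ> ?s \<circ> tr p' q')"
        using mk_step[OF csS rg(1) lt rg(2)] by simp
      have e: "c \<circ> ?s \<circ> tr p' q' = c' \<circ> ?s"
        using pq(4) by (auto simp: p'_def q'_def transpose_def fun_eq_iff)
      show ?thesis using st1 e mnc by simp
    qed
  qed
qed

lemma mn_less:
  assumes "bruhat_less n a b" and m: "1 \<le> m" "m < n"
  shows "(bruhat_step n)\<^sup>*\<^sup>* (mn m a) (mn m b)"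
  using assms(1) unfolding bruhat_less_def
proof (induction rule: tranclp_induct)
  case (base y) then show ?case using mn_step[OF _ m] by blast
next
  case (step y z) then show ?case using mn_step[OF step.hyps(2) m] by simp
qed

lemma IvD: "(i,j) \<in> Iv n p \<Longrightarrow> i \<in> {1..n} \<and> j \<in> {1..n} \<and> i < j \<and> p i > p j"
  by (simp add: Iv_def)

lemma IvI: "i \<in> {1..n} \<Longrightarrow> j \<in> {1..n} \<Longrightarrow> i < j \<Longrightarrow> p i > p j \<Longrightarrow> (i,j) \<in> Iv n p"
  by (simp add: Iv_def)

lemma Iv_subI:
  assumes "\<And>i j. i \<in> {1..n} \<Longrightarrow> j \<in> {1..n} \<Longrightarrow> i < j \<Longrightarrow> p i > p j \<Longrightarrow> q i > q j"
  shows "Iv n p \<subseteq> Iv n q"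
proof
  fix x assume x: "x \<in> Iv n p"
  obtain i j where ij: "x = (i,j)" by (cases x)
  show "x \<in> Iv n q" using IvD[of i j n p] x ij assms IvI[of i n j q] by simp
qed

lemma Iv_subD:
  assumes "Iv n p \<subseteq> Iv n q" "i \<in> {1..n}" "j \<in> {1..n}" "i < j" "p i > p j"
  shows "q i > q j"
proof -
  have "(i,j) \<in> Iv n p" using assms by (simp add: Iv_def)
  then have "(i,j) \<in> Iv n q" using assms(1) by blast
  then show ?thesis by (simp add: Iv_def)
qed

lemma P1:
  assumes sub: "Iv n u \<subseteq> Iv n w" and m: "1 \<le> m" "m < n"
    and um: "u m < u (Suc m)" and wm: "w m > w (Suc m)"
  shows "Iv n (u \<circ> tr m (Suc m)) \<subseteq> Iv n w"
proof (rule Iv_subI)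
  fix i j assume r: "i \<in> {1..n}" "j \<in> {1..n}" "i < j" "(u \<circ> tr m (Suc m)) i > (u \<circ> tr m (Suc m)) j"
  note H = Iv_subD[OF sub]
  have mr: "m \<in> {1..n}" "Suc m \<in> {1..n}" using m by auto
  show "w i > w j"
  proof -
    consider "i = m" "j = Suc m" | "i = m" "j > Suc m" | "i = Suc m" | "j = m" | "j = Suc m" "i < m"
      | "i \<noteq> m" "i \<noteq> Suc m" "j \<noteq> m" "j \<noteq> Suc m" using r(3) by linarith
    then show ?thesis
    proof cases
      case 1 then show ?thesis using wm by simp
    next
      case 2 then have "u (Suc m) > u j" using r by simp
      then have "w (Suc m) > w j" using H[OF mr(2) r(2)] 2 by simp
      then show ?thesis using wm 2 by simp
    next
      case 3 then have "u m > u j" "j \<noteq> m" using r by auto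
      then have "u (Suc m) > u j" using um by simp
      then have "w (Suc m) > w j" using H[OF mr(2) r(2)] 3 r by simp
      then show ?thesis using 3 by simp
    next
      case 4 then have "u i > u (Suc m)" "i \<noteq> Suc m" using r by auto
      then have "u i > u m" using um by simp
      then show ?thesis using H[OF r(1) mr(1)] 4 r by simp
    next
      case 5 then have "u i > u m" using r by simp
      then have "w i > w m" using H[OF r(1) mr(1)] 5 by simp
      then show ?thesis using wm 5 by simp
    next
      case 6 then show ?thesis using H[OF r(1) r(2) r(3)] r(4) by simp
    qed
  qed
qed

lemma P2:
  assumes sub: "Iv n u \<subseteq> Iv n w" and m: "1 \<le> m" "m < n"
    and um: "u m < u (Suc m)" and wm: "w m < w (Suc m)"
  shows "Iv n (u \<circ> tr m (Suc m)) \<subseteq> Iv n (w \<circ> tr m (Suc m))"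
proof (rule Iv_subI)
  fix i j assume r: "i \<in> {1..n}" "j \<in> {1..n}" "i < j" "(u \<circ> tr m (Suc m)) i > (u \<circ> tr m (Suc m)) j"
  note H = Iv_subD[OF sub]
  let ?s = "tr m (Suc m)"
  show "(w \<circ> ?s) i > (w \<circ> ?s) j"
  proof (cases "i = m \<and> j = Suc m")
    case True then show ?thesis using wm by simp
  next
    case False
    have lt: "?s i < ?s j" using False r(3) by (auto simp: transpose_def)
    have rg: "?s i \<in> {1..n}" "?s j \<in> {1..n}" using r m by (auto simp: transpose_def)
    show ?thesis using H[OF rg lt] r(4) by simp
  qed
qed

lemma P3:
  assumes sub: "Iv n v \<subseteq> Iv n (w \<circ> tr m (Suc m))" and m: "1 \<le> m" "m < n"
    and vm: "v m > v (Suc m)"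
  shows "Iv n (v \<circ> tr m (Suc m)) \<subseteq> Iv n w"
proof (rule Iv_subI)
  fix i j assume r: "i \<in> {1..n}" "j \<in> {1..n}" "i < j" "(v \<circ> tr m (Suc m)) i > (v \<circ> tr m (Suc m)) j"
  note H = Iv_subD[OF sub]
  let ?s = "tr m (Suc m)"
  show "w i > w j"
  proof (cases "i = m \<and> j = Suc m")
    case True then show ?thesis using vm r(4) by simp
  next
    case False
    have lt: "?s i < ?s j" using False r(3) by (auto simp: transpose_def)
    have rg: "?s i \<in> {1..n}" "?s j \<in> {1..n}" using r m by (auto simp: transpose_def)
    show ?thesis using H[OF rg lt] r(4) by simp
  qed
qed

lemma P4:
  assumes sub: "Iv n v \<subseteq> Iv n (w \<circ> tr m (Suc m))" and m: "1 \<le> m" "m < n"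
    and vm: "v m < v (Suc m)" and wm: "w m < w (Suc m)"
  shows "Iv n v \<subseteq> Iv n w"
proof (rule Iv_subI)
  fix i j assume r: "i \<in> {1..n}" "j \<in> {1..n}" "i < j" "v i > v j"
  note H = Iv_subD[OF sub]
  have mr: "m \<in> {1..n}" "Suc m \<in> {1..n}" using m by auto
  show "w i > w j"
  proof -
    consider "i = m" "j = Suc m" | "i = m" "j > Suc m" | "i = Suc m" | "j = m" | "j = Suc m" "i < m"
      | "i \<noteq> m" "i \<noteq> Suc m" "j \<noteq> m" "j \<noteq> Suc m" using r(3) by linarith
    then show ?thesis
    proof cases
      case 1 then show ?thesis using vm r by simp
    next
      case 2 then have "v (Suc m) > v j" using r vm by simp
      then show ?thesis using H[OF mr(2) r(2)] 2 by simp
    next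
      case 3 then have "j \<noteq> m" "j \<noteq> Suc m" using r by auto
      then have "w m > w j" using H[OF mr(2) r(2)] 3 r by simp
      then show ?thesis using wm 3 by simp
    next
      case 4 then have "i \<noteq> Suc m" "i \<noteq> m" using r by auto
      then have "w i > w (Suc m)" using H[OF r(1) mr(1)] 4 r by simp
      then show ?thesis using wm 4 by simp
    next
      case 5 then have "v i > v m" using r vm by simp
      then show ?thesis using H[OF r(1) mr(1)] 5 by simp
    next
      case 6 then show ?thesis using H[OF r(1) r(2) r(3)] r(4) by simp
    qed
  qed
qed

lemma Sym_bij: "p \<in> Sym n \<Longrightarrow> bij p"
  unfolding Sym_def by (simp add: permutes_bij)

lemma inv_comp_cancel: "p \<in> Sym n \<Longrightarrow> inv p (p x) = x"
  using Sym_bij bij_is_inj inv_f_f by metis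

lemma main:
  fixes \<pi> :: "nat \<Rightarrow> nat"
  shows "\<forall>w u. u \<in> Sym n \<longrightarrow> left_weak n u w \<longrightarrow> right_weak n u \<pi>
    \<longrightarrow> len n (w \<circ> inv u \<circ> \<pi>) + len n u < len n w + len n \<pi>
    \<longrightarrow> len n \<pi> - len n u = k
    \<longrightarrow> (\<exists>u' \<in> Sym n. bruhat_less n u u' \<and> left_weak n u' w \<and> right_weak n u' \<pi>)"
proof (induction k rule: less_induct)
  case (less k)
  show ?case
  proof (intro allI impI)
    fix w u
    assume uS: "u \<in> Sym n" and lw: "left_weak n u w" and rw: "right_weak n u \<pi>"
      and N: "len n (w \<circ> inv u \<circ> \<pi>) + len n u < len n w + len n \<pi>"
      and K: "len n \<pi> - len n u = k"
    have wS: "w \<in> Sym n" and piS: "\<pi> \<in> Sym n" using lw rw unfolding left_weak_def right_weak_def by auto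
    obtain y where y: "y \<in> Sym n" "\<pi> = u \<circ> y" "len n \<pi> = len n u + len n y"
      using rw unfolding right_weak_def by blast
    have Iuw: "Iv n u \<subseteq> Iv n w" using lw left_weak_iff by blast
    have e1: "w \<circ> inv u \<circ> \<pi> = w \<circ> y"
      by (simp add: fun_eq_iff y(2) inv_comp_cancel[OF uS])
    have N1: "len n (w \<circ> y) < len n w + len n y" using N e1 y(3) by simp
    have ly: "len n y > 0"
    proof (rule ccontr)
      assume "\<not> ?thesis"
      then have l0: "len n y = 0" by simp
      have "len n (w \<circ> y \<circ> inv y) \<le> len n (w \<circ> y) + len n (inv y)"
        by (rule subadd[OF Sym_comp[OF wS y(1)] Sym_inv[OF y(1)]])
      moreover have "w \<circ> y \<circ> inv y = w" by (simp add: comp_assoc Sym_invo(2)[OF y(1)])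
      ultimately show False using N1 l0 len_inv[OF y(1)] by simp
    qed
    have iyS: "inv y \<in> Sym n" using Sym_inv[OF y(1)] .
    obtain m where m: "1 \<le> m" "m < n" and dm: "inv y m > inv y (Suc m)"
      using descent_exists[OF iyS] len_inv[OF y(1)] ly by auto
    let ?s = "tr m (Suc m)"
    have sS: "?s \<in> Sym n" using tr_Sym[OF m] .
    define y1 where "y1 = ?s \<circ> y"
    define u1 where "u1 = u \<circ> ?s"
    have y1S: "y1 \<in> Sym n" unfolding y1_def using Sym_comp[OF sS y(1)] .
    have u1S: "u1 \<in> Sym n" unfolding u1_def using Sym_comp[OF uS sS] .
    have "inv y1 = inv y \<circ> ?s"
      unfolding y1_def using o_inv_distrib[OF bij_transpose Sym_bij[OF y(1)]] by simp
    then have ly1: "len n y1 + 1 = len n y"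
      using right_down[OF iyS m dm] len_inv[OF y1S] len_inv[OF y(1)] by simp
    have pi1: "\<pi> = u1 \<circ> y1" by (simp add: fun_eq_iff u1_def y1_def y(2))
    have "len n \<pi> \<le> len n u1 + len n y1" using subadd[OF u1S y1S] pi1 by simp
    moreover have "len n u1 \<le> len n u + 1" using subadd[OF uS sS] len_s[OF m] by (simp add: u1_def)
    ultimately have lu1: "len n u1 = len n u + 1" and lpi1: "len n \<pi> = len n u1 + len n y1"
      using ly1 y(3) by linarith+
    have um: "u m < u (Suc m)"
    proof (rule ccontr)
      assume "\<not> ?thesis"
      moreover have "u m \<noteq> u (Suc m)" using Sym_ne[OF uS] by simp
      ultimately have "u m > u (Suc m)" by simp
      from right_down[OF uS m this] show False using lu1 by (simp add: u1_def)
    qed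
    have rw1: "right_weak n u1 \<pi>"
      unfolding right_weak_def using u1S piS y1S pi1 lpi1 by blast
    have wne: "w m \<noteq> w (Suc m)" using Sym_ne[OF wS] by simp
    show "\<exists>u' \<in> Sym n. bruhat_less n u u' \<and> left_weak n u' w \<and> right_weak n u' \<pi>"
    proof (cases "w m > w (Suc m)")
      case True
      have st: "bruhat_step n u u1" unfolding u1_def using mk_step[OF uS m(1) _ _ um] m by simp
      have "left_weak n u1 w" using left_weak_iff P1[OF Iuw m um True] u1S wS by (simp add: u1_def)
      then show ?thesis using st rw1 u1S unfolding bruhat_less_def by blast
    next
      case False
      then have wm: "w m < w (Suc m)" using wne by simp
      define w1 where "w1 = w \<circ> ?s"
      have w1S: "w1 \<in> Sym n" unfolding w1_def using Sym_comp[OF wS sS] .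
      have lw1: "left_weak n u1 w1"
        using left_weak_iff P2[OF Iuw m um wm] u1S w1S by (simp add: u1_def w1_def)
      have lw1len: "len n w1 = len n w + 1" unfolding w1_def using right_up[OF wS m wm] .
      have e2: "w1 \<circ> inv u1 \<circ> \<pi> = w \<circ> y"
        by (simp add: fun_eq_iff pi1 inv_comp_cancel[OF u1S] w1_def y1_def)
      have N2: "len n (w1 \<circ> inv u1 \<circ> \<pi>) + len n u1 < len n w1 + len n \<pi>"
        using N e1 e2 lu1 lw1len by simp
      have K2: "len n \<pi> - len n u1 < k" using K lu1 ly y(3) by simp
      from less.IH[OF K2, rule_format, OF u1S lw1 rw1 N2 refl]
      obtain u2 where u2S: "u2 \<in> Sym n" and bl2: "bruhat_less n u1 u2" and lw2: "left_weak n u2 w1"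
        and rw2: "right_weak n u2 \<pi>" by blast
      have I2: "Iv n u2 \<subseteq> Iv n (w \<circ> ?s)" using lw2 left_weak_iff by (simp add: w1_def)
      have u2ne: "u2 m \<noteq> u2 (Suc m)" using Sym_ne[OF u2S] by simp
      show ?thesis
      proof (cases "u2 m > u2 (Suc m)")
        case True
        define u' where "u' = u2 \<circ> ?s"
        have u'S: "u' \<in> Sym n" unfolding u'_def using Sym_comp[OF u2S sS] .
        have lw': "left_weak n u' w"
          using left_weak_iff P3[OF I2 m True] u'S wS by (simp add: u'_def)
        obtain y2 where y2: "y2 \<in> Sym n" "\<pi> = u2 \<circ> y2" "len n \<pi> = len n u2 + len n y2"
          using rw2 unfolding right_weak_def by blast
        have y3S: "?s \<circ> y2 \<in> Sym n" using Sym_comp[OF sS y2(1)] .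
        have pi3: "\<pi> = u' \<circ> (?s \<circ> y2)" by (simp add: fun_eq_iff u'_def y2(2))
        have l1: "len n u' + 1 = len n u2" unfolding u'_def using right_down[OF u2S m True] .
        have l2: "len n (?s \<circ> y2) \<le> 1 + len n y2" using subadd[OF sS y2(1)] len_s[OF m] by simp
        have l3: "len n \<pi> \<le> len n u' + len n (?s \<circ> y2)" using subadd[OF u'S y3S] pi3 by simp
        have "len n \<pi> = len n u' + len n (?s \<circ> y2)" using l1 l2 l3 y2(3) by linarith
        then have rw': "right_weak n u' \<pi>"
          unfolding right_weak_def using u'S piS y3S pi3 by blast
        have mn1: "mn m u1 = u" using um by (simp add: mn_def u1_def ss)
        have mn2: "mn m u2 = u'" using True by (simp add: mn_def u'_def)
        have rt: "(bruhat_step n)\<^sup>*\<^sup>* u u'" using mn_less[OF bl2 m] mn1 mn2 by simp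
        have "u \<noteq> u'"
        proof
          assume "u = u'"
          then have "u1 = u2" by (simp add: u1_def u'_def ss)
          then show False using less_len[OF bl2] by simp
        qed
        then have "bruhat_less n u u'" using rtranclpD[OF rt] unfolding bruhat_less_def by blast
        then show ?thesis using u'S lw' rw' by blast
      next
        case False
        then have u2m: "u2 m < u2 (Suc m)" using u2ne by simp
        have lw': "left_weak n u2 w"
          using left_weak_iff P4[OF I2 m u2m wm] u2S wS by simp
        have st: "bruhat_step n u u1" unfolding u1_def using mk_step[OF uS m(1) _ _ um] m by simp
        have "bruhat_less n u u2" using tranclp_into_tranclp2[where r="bruhat_step n", OF st] bl2 unfolding bruhat_less_def by simp
        then show ?thesis using u2S lw' rw2 by blast
      qed
    qed
  qed
qed

theorem lemma7p1:
  fixes n :: nat and w \<pi> u :: "nat \<Rightarrow> nat"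
  assumes "w \<in> Sym n" and "\<pi> \<in> Sym n" and "u \<in> Sym n"
    and "left_weak n u w" and "right_weak n u \<pi>"
    and "len n (w \<circ> inv u) + len n u + len n (inv u \<circ> \<pi>) > len n (w \<circ> inv u \<circ> \<pi>)"
  shows "\<exists>u' \<in> Sym n. bruhat_less n u u' \<and> left_weak n u' w \<and> right_weak n u' \<pi>"
proof -
  obtain z where z: "z \<in> Sym n" "w = z \<circ> u" "len n w = len n z + len n u"
    using assms(4) unfolding left_weak_def by blast
  obtain y where y: "y \<in> Sym n" "\<pi> = u \<circ> y" "len n \<pi> = len n u + len n y"
    using assms(5) unfolding right_weak_def by blast
  have e1: "w \<circ> inv u = z" using z(2) by (simp add: comp_assoc Sym_invo(2)[OF assms(3)])
  have e2: "inv u \<circ> \<pi> = y" using y(2) by (simp add: fun_eq_iff inv_comp_cancel[OF assms(3)])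
  have N: "len n (w \<circ> inv u \<circ> \<pi>) + len n u < len n w + len n \<pi>"
    using assms(6) e1 e2 z(3) y(3) by simp
  show ?thesis using main[of n \<pi> "len n \<pi> - len n u", rule_format, OF assms(3,4,5) N refl] .
qed

end
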